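(* Let $\mathcal{M}$ be an ergodic (not necessarily reversible) Markov chain on a finite state space, and let $\widetilde{\mathcal{M}}$ be its continuization. Then $$\Phi(\mathcal{M})\ \ge\ \frac{\frac12-\frac{1}{2e}}{\tau(\widetilde{\mathcal{M}},\frac{1}{2e})}.$$
   Context: A (discrete-time) Markov chain on a finite state space $\Omega$ with transition matrix $P$ is ergodic if irreducible and aperiodic; it then has a unique stationary distribution $\pi>0$. Variation distance: $\|\theta_1-\theta_2\|=\frac12\sum_i|\theta_1(i)-\theta_2(i)|$. Continuization: with $Q=P-I$, the continuous-time chain $\widetilde{\mathcal{M}}$ has time-$t$ transition matrix $\widetilde P^t=\exp(Qt)$ (matrix exponential), $t\ge0$ real. Its mixing time from $x$ is $\tau_x(\widetilde{\mathcal{M}},\varepsilon)=\inf\{t>0: \|v_x\exp(Qt')-\pi\|\le\varepsilon \text{ for all real } t'\ge t\}$, where $v_x$ is the row unit vector at $x$, and $\tau(\widetilde{\mathcal{M}},\varepsilon)=\max_x\tau_x(\widetilde{\mathcal{M}},\varepsilon)$. Conductance: for $S\subset\Omega$ with $0<\pi(S)<1$ and $\bar S=\Omega\setminus S$, $\Phi_S(\mathcal{M})=\dfrac{\sum_{i\in S}\sum_{j\in\bar S}\pi(i)P(i,j)+\sum_{i\in\bar S}\sum_{j\in S}\pi(i)P(i,j)}{2\pi(S)\pi(\bar S)}$, and $\Phi(\mathcal{M})=\min_S\Phi_S(\mathcal{M})$ over all such $S$. *)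

theory Defs
  imports Complex_Main
begin

definition id_mat :: "'a \<Rightarrow> 'a \<Rightarrow> real" where
  "id_mat x y = (if x = y then 1 else 0)"

fun mpow :: "('a::finite \<Rightarrow> 'a \<Rightarrow> real) \<Rightarrow> nat \<Rightarrow> 'a \<Rightarrow> 'a \<Rightarrow> real" where
  "mpow M 0 = id_mat"
| "mpow M (Suc n) = (\<lambda>x y. \<Sum>z\<in>UNIV. mpow M n x z * M z y)"

definition stochastic :: "('a::finite \<Rightarrow> 'a \<Rightarrow> real) \<Rightarrow> bool" where
  "stochastic P \<longleftrightarrow> (\<forall>x y. P x y \<ge> 0) \<and> (\<forall>x. (\<Sum>y\<in>UNIV. P x y) = 1)"

definition irreducible_chain :: "('a::finite \<Rightarrow> 'a \<Rightarrow> real) \<Rightarrow> bool" where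
  "irreducible_chain P \<longleftrightarrow> (\<forall>x y. \<exists>n. mpow P n x y > 0)"

definition aperiodic_chain :: "('a::finite \<Rightarrow> 'a \<Rightarrow> real) \<Rightarrow> bool" where
  "aperiodic_chain P \<longleftrightarrow> (\<forall>x. Gcd {n::nat. n \<ge> 1 \<and> mpow P n x x > 0} = 1)"

definition ergodic :: "('a::finite \<Rightarrow> 'a \<Rightarrow> real) \<Rightarrow> bool" where
  "ergodic P \<longleftrightarrow> stochastic P \<and> irreducible_chain P \<and> aperiodic_chain P"

definition stationary :: "('a::finite \<Rightarrow> 'a \<Rightarrow> real) \<Rightarrow> ('a \<Rightarrow> real) \<Rightarrow> bool" where
  "stationary P \<pi> \<longleftrightarrow> (\<forall>x. \<pi> x \<ge> 0) \<and> (\<Sum>x\<in>UNIV. \<pi> x) = 1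
      \<and> (\<forall>y. (\<Sum>x\<in>UNIV. \<pi> x * P x y) = \<pi> y)"

definition generator :: "('a \<Rightarrow> 'a \<Rightarrow> real) \<Rightarrow> 'a \<Rightarrow> 'a \<Rightarrow> real" where
  "generator P x y = P x y - id_mat x y"

text \<open>Matrix exponential exp(Q t), entrywise as the power series sum_k (tQ)^k / k!.\<close>
definition cont_kernel :: "('a::finite \<Rightarrow> 'a \<Rightarrow> real) \<Rightarrow> real \<Rightarrow> 'a \<Rightarrow> 'a \<Rightarrow> real" where
  "cont_kernel P t x y = (\<Sum>k. t ^ k / fact k * mpow (generator P) k x y)"

definition var_dist :: "('a::finite \<Rightarrow> real) \<Rightarrow> ('a \<Rightarrow> real) \<Rightarrow> real" where
  "var_dist \<theta>1 \<theta>2 = (1/2) * (\<Sum>i\<in>UNIV. \<bar>\<theta>1 i - \<theta>2 i\<bar>)"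

definition mixing_time_from ::
  "('a::finite \<Rightarrow> 'a \<Rightarrow> real) \<Rightarrow> ('a \<Rightarrow> real) \<Rightarrow> real \<Rightarrow> 'a \<Rightarrow> real" where
  "mixing_time_from P \<pi> \<epsilon> x =
     Inf {t. t > 0 \<and> (\<forall>t'. t' \<ge> t \<longrightarrow> var_dist (cont_kernel P t' x) \<pi> \<le> \<epsilon>)}"

definition mixing_time ::
  "('a::finite \<Rightarrow> 'a \<Rightarrow> real) \<Rightarrow> ('a \<Rightarrow> real) \<Rightarrow> real \<Rightarrow> real" where
  "mixing_time P \<pi> \<epsilon> = Max (range (mixing_time_from P \<pi> \<epsilon>))"

definition cond_set :: "('a::finite \<Rightarrow> 'a \<Rightarrow> real) \<Rightarrow> ('a \<Rightarrow> real) \<Rightarrow> 'a set \<Rightarrow> real" where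
  "cond_set P \<pi> S =
     ((\<Sum>i\<in>S. \<Sum>j\<in>UNIV - S. \<pi> i * P i j) + (\<Sum>i\<in>UNIV - S. \<Sum>j\<in>S. \<pi> i * P i j))
     / (2 * sum \<pi> S * sum \<pi> (UNIV - S))"

definition conductance :: "('a::finite \<Rightarrow> 'a \<Rightarrow> real) \<Rightarrow> ('a \<Rightarrow> real) \<Rightarrow> real" where
  "conductance P \<pi> = Min (cond_set P \<pi> ` {S. 0 < sum \<pi> S \<and> sum \<pi> S < 1})"

end

theory Submission
  imports Defs
begin

lemma sum_id_right: fixes y :: "'a::finite" shows "(\<Sum>z\<in>UNIV. f z * id_mat z y) = (f y :: real)"
proof -
  have "(\<lambda>z. f z * id_mat z y) = (\<lambda>z. if z = y then f z else 0)" by (auto simp: id_mat_def)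
  then show ?thesis by (metis (no_types) sum.delta sum.delta' finite UNIV_I)
qed

lemma sum_id_left: fixes x :: "'a::finite" shows "(\<Sum>z\<in>UNIV. id_mat x z * f z) = (f x :: real)"
proof -
  have "(\<lambda>z. id_mat x z * f z) = (\<lambda>z. if x = z then f z else 0)" by (auto simp: id_mat_def)
  then show ?thesis by (metis (no_types) sum.delta sum.delta' finite UNIV_I)
qed

lemma mpow_add:
  fixes M :: "'a::finite \<Rightarrow> 'a \<Rightarrow> real"
  shows "mpow M (i + j) x y = (\<Sum>z\<in>UNIV. mpow M i x z * mpow M j z y)"
proof (induction j arbitrary: y)
  case 0
  then show ?case by (simp add: sum_id_right)
next
  case (Suc j)
  have "mpow M (i + Suc j) x y = (\<Sum>w\<in>UNIV. mpow M (i+j) x w * M w y)" by simp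
  also have "\<dots> = (\<Sum>w\<in>UNIV. \<Sum>z\<in>UNIV. mpow M i x z * mpow M j z w * M w y)"
    by (simp add: Suc sum_distrib_right)
  also have "\<dots> = (\<Sum>z\<in>UNIV. \<Sum>w\<in>UNIV. mpow M i x z * (mpow M j z w * M w y))"
    by (subst sum.swap) (simp add: mult.assoc)
  also have "\<dots> = (\<Sum>z\<in>UNIV. mpow M i x z * mpow M (Suc j) z y)"
    by (simp add: sum_distrib_left)
  finally show ?case .
qed

lemma binom_step:
  fixes a :: "nat \<Rightarrow> real"
  shows "(\<Sum>i\<le>k. of_nat (k choose i) * (-1)^(k-i) * a (Suc i))
       - (\<Sum>i\<le>k. of_nat (k choose i) * (-1)^(k-i) * a i)
       = (\<Sum>i\<le>Suc k. of_nat (Suc k choose i) * (-1)^(Suc k-i) * a i)"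
proof -
  have r: "(\<Sum>i\<le>Suc k. of_nat (Suc k choose i) * (-1)^(Suc k-i) * a i)
     = (-1)^(Suc k) * a 0 + (\<Sum>j\<le>k. of_nat (Suc k choose Suc j) * (-1)^(k-j) * a (Suc j))"
    by (subst sum.atMost_Suc_shift) simp
  have r2: "(\<Sum>j\<le>k. of_nat (Suc k choose Suc j) * (-1)^(k-j) * a (Suc j))
     = (\<Sum>j\<le>k. of_nat (k choose j) * (-1)^(k-j) * a (Suc j))
       + (\<Sum>j\<le>k. of_nat (k choose Suc j) * (-1)^(k-j) * a (Suc j))"
    by (simp add: sum.distrib[symmetric] algebra_simps)
  have r3: "(\<Sum>i\<le>k. of_nat (k choose i) * (-1)^(k-i) * a i)
     = (-1)^k * a 0 + (\<Sum>j<k. of_nat (k choose Suc j) * (-1)^(k- Suc j) * a (Suc j))"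
  proof (cases k)
    case 0 then show ?thesis by simp
  next
    case (Suc m)
    show ?thesis unfolding Suc
      by (subst sum.atMost_Suc_shift) (simp add: lessThan_Suc_atMost)
  qed
  have r4: "(\<Sum>j\<le>k. of_nat (k choose Suc j) * (-1)^(k-j) * a (Suc j))
     = - (\<Sum>j<k. of_nat (k choose Suc j) * (-1)^(k- Suc j) * a (Suc j))"
  proof -
    have "(\<Sum>j\<le>k. of_nat (k choose Suc j) * (-1)^(k-j) * a (Suc j))
        = (\<Sum>j<k. of_nat (k choose Suc j) * (-1)^(k-j) * a (Suc j))"
      by (simp add: lessThan_Suc_atMost[symmetric])
    also have "\<dots> = (\<Sum>j<k. - (of_nat (k choose Suc j) * (-1)^(k- Suc j) * a (Suc j)))"
    proof (rule sum.cong)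
      fix j assume "j \<in> {..<k}"
      then have "k - j = Suc (k - Suc j)" by auto
      then show "of_nat (k choose Suc j) * (-1)^(k-j) * a (Suc j) = - (of_nat (k choose Suc j) * (-1)^(k- Suc j) * a (Suc j))"
        by simp
    qed simp
    finally show ?thesis by (simp add: sum_negf)
  qed
  show ?thesis using r r2 r3 r4 by simp
qed

lemma mpow_generator:
  fixes P :: "'a::finite \<Rightarrow> 'a \<Rightarrow> real"
  shows "mpow (generator P) k x y = (\<Sum>i\<le>k. of_nat (k choose i) * (-1)^(k-i) * mpow P i x y)"
proof (induction k arbitrary: y)
  case 0
  then show ?case by simp
next
  case (Suc k)
  have "mpow (generator P) (Suc k) x y = (\<Sum>z\<in>UNIV. mpow (generator P) k x z * P z y) - mpow (generator P) k x y"
    by (simp add: generator_def right_diff_distrib sum_subtractf sum_id_right)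
  also have "(\<Sum>z\<in>UNIV. mpow (generator P) k x z * P z y)
     = (\<Sum>i\<le>k. of_nat (k choose i) * (-1)^(k-i) * mpow P (Suc i) x y)"
    by (simp add: Suc sum_distrib_right sum_distrib_left mult.assoc cong: sum.cong) (subst sum.swap, simp)
  finally show ?case using binom_step[of k "\<lambda>i. mpow P i x y"] Suc by simp
qed

definition Ek :: "('a::finite \<Rightarrow> 'a \<Rightarrow> real) \<Rightarrow> real \<Rightarrow> 'a \<Rightarrow> 'a \<Rightarrow> real" where
  "Ek M t x y = (\<Sum>k. t ^ k / fact k * mpow M k x y)"

lemma cont_kernel_Ek: "cont_kernel P t x y = Ek (generator P) t x y"
  by (simp add: cont_kernel_def Ek_def)

lemma mpow_bound:
  fixes M :: "'a::finite \<Rightarrow> 'a \<Rightarrow> real"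
  shows "\<bar>mpow M k x y\<bar> \<le> (\<Sum>z\<in>UNIV. \<Sum>w\<in>UNIV. \<bar>M z w\<bar>) ^ k"
proof (induction k arbitrary: y)
  case 0
  then show ?case by (simp add: id_mat_def)
next
  case (Suc k)
  define B where "B = (\<Sum>z\<in>UNIV. \<Sum>w\<in>UNIV. \<bar>M z w\<bar>)"
  have B0: "B \<ge> 0" unfolding B_def by (intro sum_nonneg) auto
  have "\<bar>mpow M (Suc k) x y\<bar> \<le> (\<Sum>z\<in>UNIV. \<bar>mpow M k x z * M z y\<bar>)"
    by (simp add: sum_abs)
  also have "\<dots> \<le> (\<Sum>z\<in>UNIV. B ^ k * \<bar>M z y\<bar>)"
    by (intro sum_mono) (auto simp: abs_mult B_def intro: mult_right_mono Suc)
  also have "\<dots> = B ^ k * (\<Sum>z\<in>UNIV. \<bar>M z y\<bar>)" by (simp add: sum_distrib_left)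
  also have "(\<Sum>z\<in>UNIV. \<bar>M z y\<bar>) \<le> B"
    unfolding B_def by (intro sum_mono member_le_sum) auto
  then have "B ^ k * (\<Sum>z\<in>UNIV. \<bar>M z y\<bar>) \<le> B ^ k * B"
    using B0 by (intro mult_left_mono) auto
  finally show ?case by (simp add: B_def mult.commute)
qed

lemma summable_norm_term:
  fixes M :: "'a::finite \<Rightarrow> 'a \<Rightarrow> real"
  shows "summable (\<lambda>k. norm (t ^ k / fact k * mpow M k x y))"
proof -
  define B where "B = (\<Sum>z\<in>UNIV. \<Sum>w\<in>UNIV. \<bar>M z w\<bar>)"
  have B0: "B \<ge> 0" unfolding B_def by (intro sum_nonneg) auto
  have "norm (norm (t ^ k / fact k * mpow M k x y)) \<le> inverse (fact k) * (\<bar>t\<bar> * B) ^ k" for k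
  proof -
    have "norm (norm (t ^ k / fact k * mpow M k x y)) = \<bar>t\<bar>^k / fact k * \<bar>mpow M k x y\<bar>"
      by (simp add: abs_mult power_abs)
    also have "\<dots> \<le> \<bar>t\<bar>^k / fact k * B ^ k"
      using mpow_bound[of M k x y] unfolding B_def by (intro mult_left_mono) auto
    finally show ?thesis by (simp add: power_mult_distrib divide_inverse mult_ac)
  qed
  then show ?thesis
    by (intro summable_comparison_test[OF _ summable_exp]) auto
qed

lemma summable_term:
  fixes M :: "'a::finite \<Rightarrow> 'a \<Rightarrow> real"
  shows "(\<lambda>k. t ^ k / fact k * mpow M k x y) sums Ek M t x y"
  unfolding Ek_def using summable_norm_term[of t M x y]
  by (intro summable_sums) (rule summable_norm_cancel)

lemma exp_sums_real: "(\<lambda>n. (x::real) ^ n / fact n) sums exp x"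
  using exp_converges[of x] by (simp add: divide_inverse mult.commute)

lemma summable_norm_exp_real: "summable (\<lambda>n. norm ((x::real) ^ n / fact n))"
proof -
  have "summable (\<lambda>n. inverse (fact n) * \<bar>x\<bar> ^ n)" by (rule summable_exp)
  then show ?thesis by (simp add: abs_mult power_abs divide_inverse mult.commute)
qed

lemma binom_fact_term:
  assumes "i \<le> n"
  shows "(s::real) ^ i / fact i * (t ^ (n - i) / fact (n - i)) = of_nat (n choose i) * s ^ i * t ^ (n - i) / fact n"
  using assms by (simp add: binomial_fact field_simps)

lemma E_semigroup:
  fixes M :: "'a::finite \<Rightarrow> 'a \<Rightarrow> real"
  shows "(\<Sum>z\<in>UNIV. Ek M s x z * Ek M t z y) = Ek M (s + t) x y"
proof -
  have c: "(\<lambda>n. \<Sum>i\<le>n. (s ^ i / fact i * mpow M i x z) * (t ^ (n - i) / fact (n - i) * mpow M (n - i) z y))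
        sums (Ek M s x z * Ek M t z y)" for z
    using Cauchy_product_sums[OF summable_norm_term[of s M x z] summable_norm_term[of t M z y]]
    by (simp add: Ek_def)
  have "(\<lambda>n. \<Sum>z\<in>UNIV. \<Sum>i\<le>n. (s ^ i / fact i * mpow M i x z) * (t ^ (n - i) / fact (n - i) * mpow M (n - i) z y))
        sums (\<Sum>z\<in>UNIV. Ek M s x z * Ek M t z y)"
    by (rule sums_sum) (rule c)
  moreover have "(\<Sum>z\<in>UNIV. \<Sum>i\<le>n. (s ^ i / fact i * mpow M i x z) * (t ^ (n - i) / fact (n - i) * mpow M (n - i) z y))
      = (s + t) ^ n / fact n * mpow M n x y" for n
  proof -
    have "(\<Sum>z\<in>UNIV. \<Sum>i\<le>n. (s ^ i / fact i * mpow M i x z) * (t ^ (n - i) / fact (n - i) * mpow M (n - i) z y))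
       = (\<Sum>i\<le>n. (s ^ i / fact i * (t ^ (n - i) / fact (n - i))) * (\<Sum>z\<in>UNIV. mpow M i x z * mpow M (n - i) z y))"
      by (subst sum.swap) (simp add: sum_distrib_left sum_divide_distrib mult_ac)
    also have "\<dots> = (\<Sum>i\<le>n. of_nat (n choose i) * s ^ i * t ^ (n - i) / fact n * mpow M n x y)"
    proof (rule sum.cong)
      fix i assume "i \<in> {..n}"
      then have i: "i \<le> n" by simp
      then show "(s ^ i / fact i * (t ^ (n - i) / fact (n - i))) * (\<Sum>z\<in>UNIV. mpow M i x z * mpow M (n - i) z y)
          = of_nat (n choose i) * s ^ i * t ^ (n - i) / fact n * mpow M n x y"
        using mpow_add[of M i "n - i" x y] binom_fact_term[OF i, of s t] by simp
    qed simp
    also have "\<dots> = (s + t) ^ n / fact n * mpow M n x y"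
      by (simp add: binomial_ring sum_distrib_right sum_divide_distrib)
    finally show ?thesis .
  qed
  ultimately have "(\<lambda>n. (s + t) ^ n / fact n * mpow M n x y) sums (\<Sum>z\<in>UNIV. Ek M s x z * Ek M t z y)"
    by simp
  then show ?thesis using summable_term[of "s+t" M x y] sums_unique2 by blast
qed

lemma poisson:
  fixes P :: "'a::finite \<Rightarrow> 'a \<Rightarrow> real"
  shows "(\<lambda>n. t ^ n / fact n * mpow P n x y) sums (exp t * Ek (generator P) t x y)"
proof -
  define W where "W = (\<Sum>n. t ^ n / fact n * mpow P n x y)"
  have c: "(\<lambda>n. \<Sum>i\<le>n. (t ^ i / fact i * mpow P i x y) * ((-t) ^ (n - i) / fact (n - i)))
        sums (W * exp (-t))"
    using Cauchy_product_sums[OF summable_norm_term[of t P x y] summable_norm_exp_real[of "-t"]]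
    using sums_unique[OF exp_sums_real[of "-t"]] by (simp add: W_def)
  have "(\<Sum>i\<le>n. (t ^ i / fact i * mpow P i x y) * ((-t) ^ (n - i) / fact (n - i)))
      = t ^ n / fact n * mpow (generator P) n x y" for n
  proof -
    have "t ^ n / fact n * mpow (generator P) n x y
        = (\<Sum>i\<le>n. t ^ n / fact n * (of_nat (n choose i) * (-1)^(n-i)) * mpow P i x y)"
      by (simp add: mpow_generator sum_distrib_left mult_ac)
    also have "\<dots> = (\<Sum>i\<le>n. (t ^ i / fact i * mpow P i x y) * ((-t) ^ (n - i) / fact (n - i)))"
    proof (rule sum.cong)
      fix i assume "i \<in> {..n}"
      then have i: "i \<le> n" by simp
      have tn: "t ^ n = t ^ i * t ^ (n - i)" using i by (simp add: power_add[symmetric])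
      have hf: "fact i * (fact (n - i) * real (n choose i)) = (fact n :: real)"
        using binomial_fact_lemma[OF i] by (metis mult.assoc of_nat_fact of_nat_mult)
      show "t ^ n / fact n * (of_nat (n choose i) * (-1)^(n-i)) * mpow P i x y
          = (t ^ i / fact i * mpow P i x y) * ((-t) ^ (n - i) / fact (n - i))"
        by (simp add: tn power_minus[of t] field_simps hf)
    qed simp
    finally show ?thesis by simp
  qed
  with c have "(\<lambda>n. t ^ n / fact n * mpow (generator P) n x y) sums (W * exp (-t))" by simp
  then have "Ek (generator P) t x y = W * exp (-t)"
    using summable_term[of t "generator P" x y] sums_unique2 by blast
  then have "W = exp t * Ek (generator P) t x y" by (simp add: exp_minus field_simps)
  moreover have "(\<lambda>n. t ^ n / fact n * mpow P n x y) sums W"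
    unfolding W_def using summable_term[of t P x y] by (simp add: sums_iff)
  ultimately show ?thesis by simp
qed

lemma mpow_stoch:
  fixes P :: "'a::finite \<Rightarrow> 'a \<Rightarrow> real"
  assumes "stochastic P"
  shows "mpow P k x y \<ge> 0 \<and> (\<Sum>y\<in>UNIV. mpow P k x y) = 1"
proof (induction k arbitrary: y)
  case 0
  then show ?case by (simp add: id_mat_def sum.delta)
next
  case (Suc k)
  have nn: "\<And>a b. P a b \<ge> 0" and rs: "\<And>a. (\<Sum>b\<in>UNIV. P a b) = 1"
    using assms by (auto simp: stochastic_def)
  have "mpow P (Suc k) x y \<ge> 0" using Suc nn by (simp add: sum_nonneg)
  moreover have "(\<Sum>y\<in>UNIV. mpow P (Suc k) x y) = 1"
  proof -
    have "(\<Sum>y\<in>UNIV. mpow P (Suc k) x y) = (\<Sum>z\<in>UNIV. mpow P k x z * (\<Sum>y\<in>UNIV. P z y))"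
      by (simp add: sum_distrib_left) (rule sum.swap)
    also have "\<dots> = 1" using Suc by (simp add: rs)
    finally show ?thesis .
  qed
  ultimately show ?case by blast
qed

lemma mpow_stat:
  fixes P :: "'a::finite \<Rightarrow> 'a \<Rightarrow> real"
  assumes "stationary P \<pi>"
  shows "(\<Sum>x\<in>UNIV. \<pi> x * mpow P k x y) = \<pi> y"
proof (induction k arbitrary: y)
  case 0
  then show ?case by (simp add: sum_id_right)
next
  case (Suc k)
  have "(\<Sum>x\<in>UNIV. \<pi> x * mpow P (Suc k) x y) = (\<Sum>z\<in>UNIV. (\<Sum>x\<in>UNIV. \<pi> x * mpow P k x z) * P z y)"
    by (simp add: sum_distrib_left sum_distrib_right mult_ac) (rule sum.swap)
  also have "\<dots> = \<pi> y" using Suc assms by (simp add: stationary_def)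
  finally show ?case .
qed

lemma K_lower:
  fixes P :: "'a::finite \<Rightarrow> 'a \<Rightarrow> real"
  assumes "stochastic P" "t \<ge> 0"
  shows "t ^ n / fact n * mpow P n x y \<le> exp t * Ek (generator P) t x y"
proof -
  have s: "(\<lambda>r. if r = n then t ^ r / fact r * mpow P r x y else 0) sums (t ^ n / fact n * mpow P n x y)"
    by (rule sums_single)
  have le: "\<And>r. (if r = n then t ^ r / fact r * mpow P r x y else 0) \<le> t ^ r / fact r * mpow P r x y"
    using mpow_stoch[OF assms(1)] assms(2) by auto
  show ?thesis by (rule sums_le[OF le s poisson])
qed

lemma K_nonneg:
  fixes P :: "'a::finite \<Rightarrow> 'a \<Rightarrow> real"
  assumes "stochastic P" "t \<ge> 0"
  shows "Ek (generator P) t x y \<ge> 0"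
proof -
  have "0 \<le> exp t * Ek (generator P) t x y"
    using K_lower[OF assms, of 0 x y] mpow_stoch[OF assms(1), of 0 x y] by simp
  then show ?thesis by (simp add: zero_le_mult_iff)
qed

lemma K_rowsum:
  fixes P :: "'a::finite \<Rightarrow> 'a \<Rightarrow> real"
  assumes "stochastic P"
  shows "(\<Sum>y\<in>UNIV. Ek (generator P) t x y) = 1"
proof -
  have "(\<lambda>n. \<Sum>y\<in>UNIV. t ^ n / fact n * mpow P n x y) sums (\<Sum>y\<in>UNIV. exp t * Ek (generator P) t x y)"
    by (rule sums_sum) (rule poisson)
  moreover have "(\<lambda>n. \<Sum>y\<in>UNIV. t ^ n / fact n * mpow P n x y) = (\<lambda>n. t ^ n / fact n)"
  proof
    fix n
    have "(\<Sum>y\<in>UNIV. t ^ n / fact n * mpow P n x y) = t ^ n / fact n * (\<Sum>y\<in>UNIV. mpow P n x y)"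
      by (simp only: sum_distrib_left)
    then show "(\<Sum>y\<in>UNIV. t ^ n / fact n * mpow P n x y) = t ^ n / fact n"
      using mpow_stoch[OF assms, of n x] by simp
  qed
  ultimately have "exp t * (\<Sum>y\<in>UNIV. Ek (generator P) t x y) = exp t"
    using exp_sums_real[of t] sums_unique2 by (metis sum_distrib_left)
  then show ?thesis by simp
qed

lemma K_stat:
  fixes P :: "'a::finite \<Rightarrow> 'a \<Rightarrow> real"
  assumes "stationary P \<pi>"
  shows "(\<Sum>x\<in>UNIV. \<pi> x * Ek (generator P) t x y) = \<pi> y"
proof -
  have "(\<lambda>n. \<Sum>x\<in>UNIV. \<pi> x * (t ^ n / fact n * mpow P n x y)) sums (\<Sum>x\<in>UNIV. \<pi> x * (exp t * Ek (generator P) t x y))"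
    by (rule sums_sum) (rule sums_mult, rule poisson)
  moreover have "(\<lambda>n. \<Sum>x\<in>UNIV. \<pi> x * (t ^ n / fact n * mpow P n x y)) = (\<lambda>n. t ^ n / fact n * \<pi> y)"
  proof
    fix n
    have "(\<Sum>x\<in>UNIV. \<pi> x * (t ^ n / fact n * mpow P n x y)) = t ^ n / fact n * (\<Sum>x\<in>UNIV. \<pi> x * mpow P n x y)"
      by (simp only: sum_distrib_left mult.left_commute)
    then show "(\<Sum>x\<in>UNIV. \<pi> x * (t ^ n / fact n * mpow P n x y)) = t ^ n / fact n * \<pi> y"
      using mpow_stat[OF assms, of n y] by simp
  qed
  ultimately have A: "(\<lambda>n. t ^ n / fact n * \<pi> y) sums (\<Sum>x\<in>UNIV. \<pi> x * (exp t * Ek (generator P) t x y))"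
    by simp
  have B: "(\<lambda>n. t ^ n / fact n * \<pi> y) sums (exp t * \<pi> y)"
    by (rule sums_mult2[OF exp_sums_real])
  have "(\<Sum>x\<in>UNIV. \<pi> x * (exp t * Ek (generator P) t x y)) = exp t * \<pi> y"
    using sums_unique2[OF A B] .
  then have "exp t * (\<Sum>x\<in>UNIV. \<pi> x * Ek (generator P) t x y) = exp t * \<pi> y"
    by (simp add: sum_distrib_left mult_ac)
  then show ?thesis by simp
qed

lemma doeblin:
  fixes A :: "'a::finite \<Rightarrow> 'a \<Rightarrow> real" and w :: "'a \<Rightarrow> real"
  assumes lb: "\<And>x y. A x y \<ge> \<delta>" and rs: "\<And>x. (\<Sum>y\<in>UNIV. A x y) = 1"
    and w0: "(\<Sum>x\<in>UNIV. w x) = 0"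
  shows "(\<Sum>y\<in>UNIV. \<bar>\<Sum>x\<in>UNIV. w x * A x y\<bar>) \<le> (1 - real (card (UNIV::'a set)) * \<delta>) * (\<Sum>x\<in>UNIV. \<bar>w x\<bar>)"
proof -
  have eq: "(\<Sum>x\<in>UNIV. w x * A x y) = (\<Sum>x\<in>UNIV. w x * (A x y - \<delta>))" for y
    using w0 by (simp add: right_diff_distrib sum_subtractf sum_distrib_right[symmetric])
  have "(\<Sum>y\<in>UNIV. \<bar>\<Sum>x\<in>UNIV. w x * A x y\<bar>) \<le> (\<Sum>y\<in>UNIV. \<Sum>x\<in>UNIV. \<bar>w x\<bar> * (A x y - \<delta>))"
  proof (rule sum_mono)
    fix y
    have "\<bar>\<Sum>x\<in>UNIV. w x * (A x y - \<delta>)\<bar> \<le> (\<Sum>x\<in>UNIV. \<bar>w x * (A x y - \<delta>)\<bar>)" by (rule sum_abs)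
    also have "\<dots> = (\<Sum>x\<in>UNIV. \<bar>w x\<bar> * (A x y - \<delta>))"
      using lb by (simp add: abs_mult)
    finally show "\<bar>\<Sum>x\<in>UNIV. w x * A x y\<bar> \<le> (\<Sum>x\<in>UNIV. \<bar>w x\<bar> * (A x y - \<delta>))" by (simp add: eq)
  qed
  also have "\<dots> = (\<Sum>x\<in>UNIV. \<bar>w x\<bar> * (\<Sum>y\<in>UNIV. A x y - \<delta>))"
    by (subst sum.swap) (simp add: sum_distrib_left)
  also have "\<dots> = (\<Sum>x\<in>UNIV. \<bar>w x\<bar> * (1 - real (card (UNIV::'a set)) * \<delta>))"
    by (simp add: sum_subtractf rs)
  also have "\<dots> = (1 - real (card (UNIV::'a set)) * \<delta>) * (\<Sum>x\<in>UNIV. \<bar>w x\<bar>)"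
    by (simp add: sum_distrib_right mult.commute)
  finally show ?thesis .
qed

lemma K_pos:
  fixes P :: "'a::finite \<Rightarrow> 'a \<Rightarrow> real"
  assumes "stochastic P" "irreducible_chain P" "t > 0"
  shows "Ek (generator P) t x y > 0"
proof -
  obtain n where n: "mpow P n x y > 0" using assms(2) unfolding irreducible_chain_def by blast
  have "0 < t ^ n / fact n * mpow P n x y" using n assms(3) by simp
  also have "\<dots> \<le> exp t * Ek (generator P) t x y" using K_lower[OF assms(1)] assms(3) by simp
  finally show ?thesis by (simp add: zero_less_mult_iff)
qed

lemma convergence:
  fixes P :: "'a::finite \<Rightarrow> 'a \<Rightarrow> real"
  assumes st: "stochastic P" and irr: "irreducible_chain P" and stat: "stationary P \<pi>" and e: "\<epsilon> > 0"
  shows "\<exists>t0>0. \<forall>t'\<ge>t0. var_dist (cont_kernel P t' x) \<pi> \<le> \<epsilon>"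
proof -
  define K where "K = Ek (generator P)"
  define \<delta> where "\<delta> = Min (range (\<lambda>(a, b). K 1 a b))"
  have lbd: "K 1 a b \<ge> \<delta>" for a b unfolding \<delta>_def by (rule Min_le) auto
  have dpos: "\<delta> > 0"
  proof -
    have "\<delta> \<in> range (\<lambda>(a, b). K 1 a b)" unfolding \<delta>_def by (rule Min_in) auto
    then obtain a b where "\<delta> = K 1 a b" by auto
    then show ?thesis using K_pos[OF st irr, of 1 a b] by (simp add: K_def)
  qed
  define \<rho> where "\<rho> = 1 - real (card (UNIV::'a set)) * \<delta>"
  have rs: "(\<Sum>y\<in>UNIV. K t a y) = 1" for t a unfolding K_def by (rule K_rowsum[OF st])
  have \<rho>0: "\<rho> \<ge> 0"
  proof -
    have "(\<Sum>y\<in>(UNIV::'a set). \<delta>) \<le> (\<Sum>y\<in>UNIV. K 1 x y)" by (rule sum_mono) (rule lbd)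
    then show ?thesis using rs[of 1 x] by (simp add: \<rho>_def)
  qed
  have \<rho>1: "\<rho> < 1" using dpos by (simp add: \<rho>_def finite_UNIV_card_ge_0)
  have pi0: "\<And>a. \<pi> a \<ge> 0" and pi1: "(\<Sum>a\<in>UNIV. \<pi> a) = 1" using stat by (auto simp: stationary_def)
  define d where "d t = (\<Sum>y\<in>UNIV. \<bar>K t x y - \<pi> y\<bar>)" for t
  have d2: "d t \<le> 2" if "t \<ge> 0" for t
  proof -
    have "d t \<le> (\<Sum>y\<in>UNIV. K t x y + \<pi> y)" unfolding d_def
      using K_nonneg[OF st that] pi0 by (intro sum_mono) (auto simp: K_def abs_le_iff intro: add_increasing add_increasing2 order_trans[of _ 0])
    also have "\<dots> = 2" using rs[of t x] pi1 by (simp add: sum.distrib)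
    finally show ?thesis .
  qed
  have dstep: "d (t + 1) \<le> \<rho> * d t" if "t \<ge> 0" for t
  proof -
    have "K (t + 1) x y - \<pi> y = (\<Sum>z\<in>UNIV. (K t x z - \<pi> z) * K 1 z y)" for y
      using E_semigroup[of "generator P" t x 1 y] K_stat[OF stat, of 1 y]
      by (simp add: K_def left_diff_distrib sum_subtractf)
    then have "d (t + 1) = (\<Sum>y\<in>UNIV. \<bar>\<Sum>z\<in>UNIV. (K t x z - \<pi> z) * K 1 z y\<bar>)"
      unfolding d_def by simp
    also have "\<dots> \<le> \<rho> * d t" unfolding \<rho>_def d_def
      by (rule doeblin[OF lbd rs]) (simp add: sum_subtractf rs pi1)
    finally show ?thesis .
  qed
  have dn: "d (t + real n) \<le> 2 * \<rho> ^ n" if "t \<ge> 0" for t n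
  proof (induction n)
    case 0
    then show ?case using d2[OF that] by simp
  next
    case (Suc n)
    have "d (t + real (Suc n)) = d ((t + real n) + 1)" by (simp add: add_ac)
    also have "\<dots> \<le> \<rho> * d (t + real n)" using that by (intro dstep) simp
    also have "\<dots> \<le> \<rho> * (2 * \<rho> ^ n)" using Suc \<rho>0 by (intro mult_left_mono)
    finally show ?case by (simp add: mult_ac)
  qed
  obtain n where n: "\<rho> ^ n < \<epsilon>" using real_arch_pow_inv[OF e \<rho>1] by blast
  show ?thesis
  proof (intro exI[of _ "real n + 1"] conjI allI impI)
    fix t' assume t': "real n + 1 \<le> t'"
    have "d t' = d ((t' - real n) + real n)" by simp
    also have "\<dots> \<le> 2 * \<rho> ^ n" using t' by (intro dn) simp
    finally have "d t' \<le> 2 * \<rho> ^ n" .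
    then show "var_dist (cont_kernel P t' x) \<pi> \<le> \<epsilon>"
      using n unfolding var_dist_def d_def K_def cont_kernel_Ek[abs_def] by simp
  qed simp
qed

lemma sums_n_exp: "(\<lambda>n. (t::real) ^ n / fact n * real n) sums (t * exp t)"
proof -
  have "(\<lambda>n. t * (t ^ n / fact n)) sums (t * exp t)" by (rule sums_mult[OF exp_sums_real])
  moreover have "(\<lambda>n. t ^ Suc n / fact (Suc n) * real (Suc n)) = (\<lambda>n. t * (t ^ n / fact n))"
  proof
    fix n
    have "fact (Suc n) = (real (Suc n)) * fact n" by simp
    then show "t ^ Suc n / fact (Suc n) * real (Suc n) = t * (t ^ n / fact n)"
      by (simp del: fact_Suc of_nat_Suc add: field_simps)
  qed
  ultimately have "(\<lambda>n. t ^ Suc n / fact (Suc n) * real (Suc n)) sums (t * exp t)" by simp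
  then show ?thesis using sums_Suc_iff[of "\<lambda>n. t ^ n / fact n * real n"] by simp
qed

lemma split_sum: "(\<Sum>y\<in>UNIV. f y) = (\<Sum>y\<in>S. f y) + (\<Sum>y\<in>UNIV - S. (f y :: real))"
  for S :: "'a::finite set"
  by (metis add.commute finite sum.subset_diff top_greatest)

lemma flow_eq:
  fixes P :: "'a::finite \<Rightarrow> 'a \<Rightarrow> real"
  assumes st: "stochastic P" and stat: "stationary P \<pi>"
  shows "(\<Sum>i\<in>S. \<Sum>j\<in>UNIV - S. \<pi> i * P i j) = (\<Sum>i\<in>UNIV - S. \<Sum>j\<in>S. \<pi> i * P i j)"
proof -
  have rs: "\<And>a. (\<Sum>b\<in>UNIV. P a b) = 1" using st by (auto simp: stochastic_def)
  have pst: "\<And>j. (\<Sum>i\<in>UNIV. \<pi> i * P i j) = \<pi> j" using stat by (auto simp: stationary_def)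
  have "(\<Sum>i\<in>S. \<Sum>j\<in>UNIV - S. \<pi> i * P i j) = (\<Sum>i\<in>S. \<pi> i - (\<Sum>j\<in>S. \<pi> i * P i j))"
  proof (rule sum.cong)
    fix i
    have "\<pi> i = (\<Sum>j\<in>UNIV. \<pi> i * P i j)" using rs[of i] by (simp add: sum_distrib_left[symmetric])
    then show "(\<Sum>j\<in>UNIV - S. \<pi> i * P i j) = \<pi> i - (\<Sum>j\<in>S. \<pi> i * P i j)"
      using split_sum[of "\<lambda>j. \<pi> i * P i j" S] by simp
  qed simp
  also have "\<dots> = (\<Sum>j\<in>S. \<pi> j - (\<Sum>i\<in>S. \<pi> i * P i j))"
    by (simp add: sum_subtractf) (rule sum.swap)
  also have "\<dots> = (\<Sum>j\<in>S. \<Sum>i\<in>UNIV - S. \<pi> i * P i j)"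
  proof (rule sum.cong)
    fix j
    show "\<pi> j - (\<Sum>i\<in>S. \<pi> i * P i j) = (\<Sum>i\<in>UNIV - S. \<pi> i * P i j)"
      using split_sum[of "\<lambda>i. \<pi> i * P i j" S] pst[of j] by simp
  qed simp
  also have "\<dots> = (\<Sum>i\<in>UNIV - S. \<Sum>j\<in>S. \<pi> i * P i j)" by (rule sum.swap)
  finally show ?thesis .
qed

lemma escape_bound:
  fixes P :: "'a::finite \<Rightarrow> 'a \<Rightarrow> real"
  assumes st: "stochastic P" and stat: "stationary P \<pi>"
  shows "(\<Sum>y\<in>UNIV - S. \<Sum>x\<in>S. \<pi> x * mpow P k x y) \<le> real k * (\<Sum>i\<in>S. \<Sum>j\<in>UNIV - S. \<pi> i * P i j)"
proof -
  define F where "F = (\<Sum>i\<in>S. \<Sum>j\<in>UNIV - S. \<pi> i * P i j)"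
  define v where "v k y = (\<Sum>x\<in>S. \<pi> x * mpow P k x y)" for k y
  have pi0: "\<And>a. \<pi> a \<ge> 0" using stat by (auto simp: stationary_def)
  have Pnn: "\<And>a b. P a b \<ge> 0" and rs: "\<And>a. (\<Sum>b\<in>UNIV. P a b) = 1"
    using st by (auto simp: stochastic_def)
  have v0: "v k y \<ge> 0" for k y unfolding v_def using pi0 mpow_stoch[OF st] by (intro sum_nonneg) auto
  have vle: "v k y \<le> \<pi> y" for k y
  proof -
    have "\<pi> y = v k y + (\<Sum>x\<in>UNIV - S. \<pi> x * mpow P k x y)"
      using split_sum[of "\<lambda>x. \<pi> x * mpow P k x y" S] mpow_stat[OF stat, of k y] by (simp add: v_def)
    moreover have "(\<Sum>x\<in>UNIV - S. \<pi> x * mpow P k x y) \<ge> 0"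
      using pi0 mpow_stoch[OF st] by (intro sum_nonneg) auto
    ultimately show ?thesis by simp
  qed
  have vS: "v (Suc k) y = (\<Sum>z\<in>UNIV. v k z * P z y)" for k y
    unfolding v_def by (simp add: sum_distrib_left sum_distrib_right mult_ac) (rule sum.swap)
  have PS: "(\<Sum>y\<in>UNIV - S. P z y) \<le> 1" for z
  proof -
    have "sum (P z) S \<ge> 0" using Pnn by (simp add: sum_nonneg)
    then show ?thesis using split_sum[of "P z" S] rs[of z] by simp
  qed
  have "(\<Sum>y\<in>UNIV - S. v k y) \<le> real k * F"
  proof (induction k)
    case 0
    have "(\<Sum>y\<in>UNIV - S. v 0 y) = 0"
      unfolding v_def by (rule sum.neutral) (auto intro!: sum.neutral simp: id_mat_def)
    then show ?case by simp
  next
    case (Suc k)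
    have "(\<Sum>y\<in>UNIV - S. v (Suc k) y) = (\<Sum>z\<in>UNIV. v k z * (\<Sum>y\<in>UNIV - S. P z y))"
      by (simp add: vS sum_distrib_left) (rule sum.swap)
    also have "\<dots> = (\<Sum>z\<in>S. v k z * (\<Sum>y\<in>UNIV - S. P z y)) + (\<Sum>z\<in>UNIV - S. v k z * (\<Sum>y\<in>UNIV - S. P z y))"
      by (rule split_sum)
    also have "(\<Sum>z\<in>S. v k z * (\<Sum>y\<in>UNIV - S. P z y)) \<le> (\<Sum>z\<in>S. \<pi> z * (\<Sum>y\<in>UNIV - S. P z y))"
      by (intro sum_mono mult_right_mono vle sum_nonneg Pnn)
    also have "(\<Sum>z\<in>UNIV - S. v k z * (\<Sum>y\<in>UNIV - S. P z y)) \<le> (\<Sum>z\<in>UNIV - S. v k z)"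
      using PS v0 by (intro sum_mono) (simp add: mult_left_le)
    also have "(\<Sum>z\<in>S. \<pi> z * (\<Sum>y\<in>UNIV - S. P z y)) = F"
      by (simp add: F_def sum_distrib_left)
    finally show ?case using Suc by (simp add: algebra_simps)
  qed
  then show ?thesis by (simp add: v_def F_def)
qed

lemma m_bound:
  fixes P :: "'a::finite \<Rightarrow> 'a \<Rightarrow> real"
  assumes st: "stochastic P" and stat: "stationary P \<pi>" and t: "t \<ge> 0"
  shows "(\<Sum>x\<in>S. \<pi> x * (\<Sum>y\<in>UNIV - S. cont_kernel P t x y)) \<le> t * (\<Sum>i\<in>S. \<Sum>j\<in>UNIV - S. \<pi> i * P i j)"
proof -
  define F where "F = (\<Sum>i\<in>S. \<Sum>j\<in>UNIV - S. \<pi> i * P i j)"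
  have A: "(\<lambda>n. \<Sum>x\<in>S. \<pi> x * (\<Sum>y\<in>UNIV - S. t ^ n / fact n * mpow P n x y))
      sums (\<Sum>x\<in>S. \<pi> x * (\<Sum>y\<in>UNIV - S. exp t * Ek (generator P) t x y))"
    by (intro sums_sum sums_mult poisson)
  have B: "(\<lambda>n. t ^ n / fact n * real n * F) sums (t * exp t * F)"
    by (rule sums_mult2[OF sums_n_exp])
  have le: "(\<Sum>x\<in>S. \<pi> x * (\<Sum>y\<in>UNIV - S. t ^ n / fact n * mpow P n x y)) \<le> t ^ n / fact n * real n * F" for n
  proof -
    have "(\<Sum>x\<in>S. \<pi> x * (\<Sum>y\<in>UNIV - S. t ^ n / fact n * mpow P n x y))
        = t ^ n / fact n * (\<Sum>y\<in>UNIV - S. \<Sum>x\<in>S. \<pi> x * mpow P n x y)"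
      by (simp add: sum_distrib_left mult_ac) (rule sum.swap)
    also have "\<dots> \<le> t ^ n / fact n * (real n * F)"
      using escape_bound[OF st stat, where S=S and k=n] t unfolding F_def by (intro mult_left_mono) auto
    finally show ?thesis by (simp add: mult_ac)
  qed
  have "(\<Sum>x\<in>S. \<pi> x * (\<Sum>y\<in>UNIV - S. exp t * Ek (generator P) t x y)) \<le> t * exp t * F"
    by (rule sums_le[OF le A B])
  then have "exp t * (\<Sum>x\<in>S. \<pi> x * (\<Sum>y\<in>UNIV - S. cont_kernel P t x y)) \<le> exp t * (t * F)"
    by (simp add: cont_kernel_Ek sum_distrib_left mult_ac)
  then show ?thesis unfolding F_def by simp
qed

lemma var_dist_lower:
  fixes \<mu> \<pi> :: "'a::finite \<Rightarrow> real"
  assumes "(\<Sum>y\<in>UNIV. \<mu> y) = 1" "(\<Sum>y\<in>UNIV. \<pi> y) = 1"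
  shows "sum \<pi> (UNIV - S) - sum \<mu> (UNIV - S) \<le> var_dist \<mu> \<pi>"
proof -
  have "(\<Sum>y\<in>S. \<mu> y - \<pi> y) \<le> (\<Sum>y\<in>S. \<bar>\<mu> y - \<pi> y\<bar>)" by (intro sum_mono) auto
  moreover have "(\<Sum>y\<in>UNIV - S. \<pi> y - \<mu> y) \<le> (\<Sum>y\<in>UNIV - S. \<bar>\<mu> y - \<pi> y\<bar>)" by (intro sum_mono) auto
  moreover have "(\<Sum>y\<in>UNIV. \<bar>\<mu> y - \<pi> y\<bar>) = (\<Sum>y\<in>S. \<bar>\<mu> y - \<pi> y\<bar>) + (\<Sum>y\<in>UNIV - S. \<bar>\<mu> y - \<pi> y\<bar>)"
    by (rule split_sum)
  moreover have "sum \<mu> S + sum \<mu> (UNIV - S) = 1" "sum \<pi> S + sum \<pi> (UNIV - S) = 1"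
    using split_sum[of \<mu> S] split_sum[of \<pi> S] assms by auto
  ultimately show ?thesis unfolding var_dist_def by (simp add: sum_subtractf)
qed

lemma after_mixing:
  fixes P :: "'a::finite \<Rightarrow> 'a \<Rightarrow> real"
  assumes st: "stochastic P" and irr: "irreducible_chain P" and stat: "stationary P \<pi>" and e: "\<epsilon> > 0"
    and t: "t > mixing_time P \<pi> \<epsilon>"
  shows "var_dist (cont_kernel P t x) \<pi> \<le> \<epsilon>"
proof -
  define X where "X = {t. t > 0 \<and> (\<forall>t'. t' \<ge> t \<longrightarrow> var_dist (cont_kernel P t' x) \<pi> \<le> \<epsilon>)}"
  have ne: "X \<noteq> {}" using convergence[OF st irr stat e, of x] by (auto simp: X_def)
  have bdd: "bdd_below X" unfolding X_def by (rule bdd_belowI[of _ 0]) auto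
  have "mixing_time_from P \<pi> \<epsilon> x \<le> mixing_time P \<pi> \<epsilon>"
    unfolding mixing_time_def by (rule Max_ge) auto
  then have "Inf X < t" using t by (simp add: mixing_time_from_def X_def)
  then obtain s where "s \<in> X" "s < t" using cInf_less_iff[OF ne bdd] by blast
  then show ?thesis by (auto simp: X_def)
qed

lemma set_bound:
  fixes P :: "'a::finite \<Rightarrow> 'a \<Rightarrow> real"
  assumes st: "stochastic P" and irr: "irreducible_chain P" and stat: "stationary P \<pi>"
    and apos: "sum \<pi> S > 0" and bge: "sum \<pi> (UNIV - S) \<ge> 1/2"
    and Tpos: "mixing_time P \<pi> (1/(2 * exp 1)) > 0"
  shows "(1/2 - 1/(2 * exp 1)) / mixing_time P \<pi> (1/(2 * exp 1)) \<le> cond_set P \<pi> S"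
proof -
  define \<epsilon> where "\<epsilon> = 1/(2 * exp (1::real))"
  define T where "T = mixing_time P \<pi> \<epsilon>"
  define a where "a = sum \<pi> S"
  define b where "b = sum \<pi> (UNIV - S)"
  define F where "F = (\<Sum>i\<in>S. \<Sum>j\<in>UNIV - S. \<pi> i * P i j)"
  have FG: "(\<Sum>i\<in>UNIV - S. \<Sum>j\<in>S. \<pi> i * P i j) = F" unfolding F_def using flow_eq[OF st stat] by simp
  have e2: "exp (1::real) \<ge> 2" using exp_ge_add_one_self[of 1] by simp
  have e0: "\<epsilon> > 0" unfolding \<epsilon>_def by simp
  have e4: "\<epsilon> \<le> 1/4" unfolding \<epsilon>_def using e2 by (simp add: field_simps)
  have pi0: "\<And>a. \<pi> a \<ge> 0" and pi1: "(\<Sum>a\<in>UNIV. \<pi> a) = 1" using stat by (auto simp: stationary_def)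
  have ab: "a + b = 1" using split_sum[of \<pi> S] pi1 by (simp add: a_def b_def)
  have a0: "a > 0" using apos by (simp add: a_def)
  have b0: "b \<ge> 1/2" using bge by (simp add: b_def)
  have key: "a * (b - \<epsilon>) \<le> t * F" if t: "t > T" for t
  proof -
    have t0: "t \<ge> 0" using t Tpos by (simp add: T_def \<epsilon>_def)
    have "b - (\<Sum>y\<in>UNIV - S. cont_kernel P t x y) \<le> \<epsilon>" for x
    proof -
      have "b - (\<Sum>y\<in>UNIV - S. cont_kernel P t x y) \<le> var_dist (cont_kernel P t x) \<pi>"
        unfolding b_def by (rule var_dist_lower) (simp_all add: cont_kernel_Ek K_rowsum[OF st] pi1)
      also have "\<dots> \<le> \<epsilon>" using after_mixing[OF st irr stat e0] t by (simp add: T_def)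
      finally show ?thesis .
    qed
    then have "(\<Sum>x\<in>S. \<pi> x * (b - (\<Sum>y\<in>UNIV - S. cont_kernel P t x y))) \<le> (\<Sum>x\<in>S. \<pi> x * \<epsilon>)"
      using pi0 by (intro sum_mono mult_left_mono) auto
    then have "a * b - (\<Sum>x\<in>S. \<pi> x * (\<Sum>y\<in>UNIV - S. cont_kernel P t x y)) \<le> a * \<epsilon>"
      by (simp add: right_diff_distrib sum_subtractf sum_distrib_right[symmetric] a_def)
    moreover have "(\<Sum>x\<in>S. \<pi> x * (\<Sum>y\<in>UNIV - S. cont_kernel P t x y)) \<le> t * F"
      unfolding F_def by (rule m_bound[OF st stat t0])
    ultimately show ?thesis by (simp add: algebra_simps)
  qed
  have pos: "a * (b - \<epsilon>) > 0" using a0 b0 e4 by simp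
  have F0: "F > 0"
  proof (rule ccontr)
    assume "\<not> F > 0"
    moreover have "F \<ge> 0" unfolding F_def using pi0 st
      by (intro sum_nonneg mult_nonneg_nonneg) (auto simp: stochastic_def)
    ultimately have "F = 0" by simp
    then show False using key[of "T + 1"] pos by simp
  qed
  have "a * (b - \<epsilon>) / F \<le> T"
  proof (rule dense_ge)
    fix t assume "T < t"
    then show "a * (b - \<epsilon>) / F \<le> t" using key[of t] F0 by (simp add: divide_le_eq mult.commute)
  qed
  then have TF: "a * (b - \<epsilon>) \<le> T * F" using F0 by (simp add: divide_le_eq)
  have "\<epsilon> * (1 - b) \<le> \<epsilon> * (1/2)" using e0 b0 by (intro mult_left_mono) auto
  then have h1: "(1/2 - \<epsilon>) * b \<le> b - \<epsilon>" using e4 b0 by (simp add: algebra_simps)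
  have h2: "(1/2 - \<epsilon>) * (a * b) \<le> T * F"
  proof -
    have "a * ((1/2 - \<epsilon>) * b) \<le> a * (b - \<epsilon>)" using mult_left_mono[OF h1, of a] a0 by simp
    then show ?thesis using TF by (simp add: mult_ac)
  qed
  have Tp: "T > 0" using Tpos by (simp add: T_def \<epsilon>_def)
  have bp: "b > 0" using b0 by simp
  have "cond_set P \<pi> S = F / (a * b)"
    unfolding cond_set_def using FG by (simp add: F_def[symmetric] a_def[symmetric] b_def[symmetric])
  moreover have "(1/2 - \<epsilon>) / T \<le> F / (a * b)"
    using h2 Tp a0 bp by (simp add: divide_le_eq le_divide_eq mult_ac)
  ultimately show ?thesis by (simp add: \<epsilon>_def T_def)
qed

lemma cond_set_compl:
  fixes P :: "'a::finite \<Rightarrow> 'a \<Rightarrow> real"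
  shows "cond_set P \<pi> (UNIV - S) = cond_set P \<pi> S"
  unfolding cond_set_def by (simp add: double_diff add.commute mult_ac)

lemma pi_pos:
  fixes P :: "'a::finite \<Rightarrow> 'a \<Rightarrow> real"
  assumes st: "stochastic P" and irr: "irreducible_chain P" and stat: "stationary P \<pi>"
  shows "\<pi> y > 0"
proof -
  have pi0: "\<And>a. \<pi> a \<ge> 0" and pi1: "(\<Sum>a\<in>UNIV. \<pi> a) = 1" using stat by (auto simp: stationary_def)
  obtain x0 where x0: "\<pi> x0 > 0"
  proof (rule ccontr)
    assume "\<not> thesis"
    have "\<pi> a = 0" for a
    proof -
      have "\<pi> a = 0 \<or> \<pi> a > 0" using pi0[of a] by auto
      then show ?thesis using that \<open>\<not> thesis\<close> by auto
    qed
    then have "\<forall>a. \<pi> a = 0" by blast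
    then show False using pi1 by simp
  qed
  have "0 < \<pi> x0 * Ek (generator P) 1 x0 y" using x0 K_pos[OF st irr, of 1 x0 y] by simp
  also have "\<dots> \<le> (\<Sum>x\<in>UNIV. \<pi> x * Ek (generator P) 1 x y)"
    by (rule member_le_sum) (use pi0 K_nonneg[OF st] in auto)
  also have "\<dots> = \<pi> y" by (rule K_stat[OF stat])
  finally show ?thesis .
qed

theorem theorem18:
  fixes P :: "'a::finite \<Rightarrow> 'a \<Rightarrow> real" and \<pi> :: "'a \<Rightarrow> real"
  assumes "card (UNIV :: 'a set) \<ge> 2"
    and "ergodic P"
    and "stationary P \<pi>"
  shows "conductance P \<pi> \<ge> (1/2 - 1/(2 * exp 1)) / mixing_time P \<pi> (1/(2 * exp 1))"
proof -
  have st: "stochastic P" and irr: "irreducible_chain P" using assms(2) by (auto simp: ergodic_def)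
  note stat = assms(3)
  have pp: "\<And>y. \<pi> y > 0" using pi_pos[OF st irr stat] .
  have pi1: "(\<Sum>a\<in>UNIV. \<pi> a) = 1" using stat by (auto simp: stationary_def)
  define C where "C = {S. 0 < sum \<pi> S \<and> sum \<pi> S < 1}"
  define T where "T = mixing_time P \<pi> (1/(2 * exp 1))"
  define c where "c = (1/2 - 1/(2 * exp (1::real)))"
  have e2: "exp (1::real) \<ge> 2" using exp_ge_add_one_self[of 1] by simp
  have c0: "c \<ge> 0" unfolding c_def using e2 by (simp add: field_simps)
  have neC: "C \<noteq> {}"
  proof -
    obtain a0 b0 :: 'a where ab: "a0 \<noteq> b0"
    proof -
      have "\<not> (\<forall>a b :: 'a. a = b)"
      proof
        assume "\<forall>a b :: 'a. a = b"
        then have U: "(UNIV :: 'a set) = {undefined}" by auto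
        have "card (UNIV :: 'a set) = 1" unfolding U by simp
        then show False using assms(1) by simp
      qed
      then show ?thesis using that by blast
    qed
    have "sum \<pi> {a0} < 1"
    proof -
      have "\<pi> a0 + \<pi> b0 = sum \<pi> {a0, b0}" using ab by simp
      also have "\<dots> \<le> sum \<pi> UNIV" using pp by (intro sum_mono2) (auto intro: less_imp_le)
      finally show ?thesis using pi1 pp[of b0] by simp
    qed
    then have "{a0} \<in> C" using pp[of a0] by (simp add: C_def)
    then show ?thesis by blast
  qed
  have each: "c / T \<le> cond_set P \<pi> S" if S: "S \<in> C" for S
  proof (cases "T > 0")
    case False
    have "c / T \<le> 0" using False c0 by (simp add: divide_nonneg_nonpos)
    also have "0 \<le> cond_set P \<pi> S" unfolding cond_set_def using pp st
      by (intro divide_nonneg_nonneg add_nonneg_nonneg sum_nonneg mult_nonneg_nonneg)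
        (auto simp: stochastic_def less_imp_le)
    finally show ?thesis .
  next
    case True
    have split: "sum \<pi> S + sum \<pi> (UNIV - S) = 1" using split_sum[of \<pi> S] pi1 by simp
    show ?thesis
    proof (cases "sum \<pi> (UNIV - S) \<ge> 1/2")
      case True
      then show ?thesis using set_bound[OF st irr stat _ True] S \<open>T > 0\<close>
        by (simp add: C_def T_def c_def)
    next
      case False
      have "c / T \<le> cond_set P \<pi> (UNIV - S)"
        using set_bound[OF st irr stat, of "UNIV - S"] S \<open>T > 0\<close> False split
        by (simp add: C_def T_def c_def double_diff)
      then show ?thesis by (simp add: cond_set_compl)
    qed
  qed
  have "c / T \<le> Min (cond_set P \<pi> ` C)"
    using neC each by (subst Min_ge_iff) auto
  then show ?thesis by (simp add: conductance_def C_def c_def T_def)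
qed

end
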